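(* For the symmetric walk started at $X_0=[\alpha N]$ with $\alpha\in(0,1)$, $$\lim_{N\to\infty}\frac{E_{[\alpha N]}[R_N]}{N}=\int_0^1\beta\,g_\alpha(\beta)\,d\beta=-\alpha\log\alpha-(1-\alpha)\log(1-\alpha).$$ Here $g_\alpha$ is the density defined in the context. The right-hand side is the entropy of the exit distribution: in the limit the walk exits at $0$ with probability $1-\alpha$ and at $N$ with probability $\alpha$. The maximum value, $\log 2$, is attained at $\alpha=1/2$.
   Context: Fix $N\ge2$ and let $\mathcal T_N=\{0,1,\dots,N\}$. Let $(X_n)_{n\ge0}$ be the symmetric nearest-neighbour random walk on $\mathcal T_N$: each step is $\pm1$ with probability $1/2$ each, and the walk is stopped the first time it is at $0$ or $N$. $P_x$ and $E_x$ denote probability and expectation with $X_0=x$. Let $T_a=\inf\{n\ge1:X_n=a\}$ and $\tau_N=T_0\wedge T_N$. Let $G(y)=\sum_{k=0}^{\tau_N}\mathbf 1\{X_k=y\}$, and let the range be $R_N=\#\{y\in\mathcal T_N:G(y)\ge1\}$. $[\cdot]$ is the integer part. With $a=\alpha\wedge(1-\alpha)$ and $b=\alpha\vee(1-\alpha)$, the density $g_\alpha$ is given by $g_\alpha(\beta)=a/\beta^2$ for $a<\beta<b$, $g_\alpha(\beta)=1/\beta^2$ for $b\le\beta\le1$, and $g_\alpha(\beta)=0$ otherwise. *)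

theory Defs
  imports "HOL-Probability.Probability"
begin

definition step_pmf :: "int pmf" where
  "step_pmf = pmf_of_set {-1, 1}"

definition walk_space :: "int stream measure" where
  "walk_space = stream_space (measure_pmf step_pmf)"

primrec walk :: "nat \<Rightarrow> int \<Rightarrow> int stream \<Rightarrow> nat \<Rightarrow> int" where
  "walk N x \<omega> 0 = x"
| "walk N x \<omega> (Suc n) =
     (if walk N x \<omega> n \<in> {0, int N} then walk N x \<omega> n else walk N x \<omega> n + \<omega> !! n)"

definition walk_range :: "nat \<Rightarrow> int \<Rightarrow> int stream \<Rightarrow> nat" where
  "walk_range N x \<omega> = card {y \<in> {0..int N}. \<exists>k. walk N x \<omega> k = y}"

definition expected_range :: "nat \<Rightarrow> int \<Rightarrow> real" where
  "expected_range N x = (\<integral>\<omega>. real (walk_range N x \<omega>) \<partial>walk_space)"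

definition g_dens :: "real \<Rightarrow> real \<Rightarrow> real" where
  "g_dens \<alpha> \<beta> =
     (let a = min \<alpha> (1 - \<alpha>); b = max \<alpha> (1 - \<alpha>) in
      if a < \<beta> \<and> \<beta> < b then a / \<beta>\<^sup>2
      else if b \<le> \<beta> \<and> \<beta> \<le> 1 then 1 / \<beta>\<^sup>2
      else 0)"

end

theory Submission
  imports Defs "HOL-Analysis.Harmonic_Numbers"
begin


lemma walk_meas[measurable]: "(\<lambda>\<omega>. walk N x \<omega> k) \<in> measurable walk_space (count_space UNIV)"
  unfolding walk_space_def
  by (induction k) (simp_all)

definition visit :: "nat \<Rightarrow> int \<Rightarrow> int \<Rightarrow> int stream set" where
  "visit N x y = {\<omega>. \<exists>k. walk N x \<omega> k = y}"

lemma visit_sets[measurable]: "visit N x y \<in> sets walk_space"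
proof -
  have "visit N x y = (\<Union>k. {\<omega>\<in>space walk_space. walk N x \<omega> k = y})"
    by (auto simp: visit_def walk_space_def space_stream_space)
  also have "\<dots> \<in> sets walk_space" by measurable
  finally show ?thesis .
qed

lemma walk_Stream: "x \<notin> {0, int N} \<Longrightarrow> walk N x (s ## \<omega>) (Suc n) = walk N (x+s) \<omega> n"
  by (induction n) auto



lemma set_pmf_step: "set_pmf step_pmf = {-1,1}"
  unfolding step_pmf_def by simp

lemma pmf_step: "t \<in> {-1,1} \<Longrightarrow> pmf step_pmf t = 1/2"
  unfolding step_pmf_def by (auto simp: pmf_of_set)

lemma ps_walk: "prob_space walk_space"
  unfolding walk_space_def
  by (rule prob_space.prob_space_stream_space) (rule prob_space_measure_pmf)

lemma walk_const: "x \<in> {0, int N} \<Longrightarrow> walk N x \<omega> k = x"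
  by (induction k) auto

lemma visit_boundary: "x \<in> {0, int N} \<Longrightarrow> visit N x y = (if x = y then UNIV else {})"
  by (auto simp: visit_def walk_const)

lemma visit_Stream: assumes "x \<notin> {0, int N}" "x \<noteq> y"
  shows "(s ## \<omega> \<in> visit N x y) = (\<omega> \<in> visit N (x+s) y)"
proof
  assume "s ## \<omega> \<in> visit N x y"
  then obtain k where k: "walk N x (s ## \<omega>) k = y" by (auto simp: visit_def)
  show "\<omega> \<in> visit N (x+s) y"
  proof (cases k)
    case 0 then show ?thesis using k assms by simp
  next
    case (Suc j) then show ?thesis using k assms unfolding visit_def
      by (metis (mono_tags, lifting) mem_Collect_eq walk_Stream)
  qed
next
  assume "\<omega> \<in> visit N (x+s) y"
  then obtain k where k: "walk N (x+s) \<omega> k = y" by (auto simp: visit_def)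
  then have "walk N x (s ## \<omega>) (Suc k) = y" using assms by (metis walk_Stream)
  then show "s ## \<omega> \<in> visit N x y" unfolding visit_def by blast
qed

lemma inv2: "inverse (2::ennreal) = ennreal (1/2)"
  by (metis ennreal_numeral inverse_ennreal zero_less_numeral inverse_eq_divide)

lemma ennreal_half: assumes "0 \<le> a" "0 \<le> b"
  shows "ennreal a * inverse 2 + ennreal b * inverse 2 = ennreal ((a + b)/2)"
proof -
  have 1: "(a+b)/2 = a*(1/2) + b*(1/2)" by simp
  have "ennreal ((a + b)/2) = ennreal (a*(1/2)) + ennreal (b*(1/2))"
    by (subst 1, rule ennreal_plus) (simp_all add: assms)
  also have "\<dots> = ennreal a * ennreal (1/2) + ennreal b * ennreal (1/2)"
    by (subst (1 2) ennreal_mult) (simp_all add: assms)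
  finally show ?thesis by (simp only: inv2)
qed

definition pv :: "nat \<Rightarrow> int \<Rightarrow> int \<Rightarrow> real" where
  "pv N x y = measure walk_space (visit N x y)"

lemma pv_boundary: "x \<in> {0, int N} \<Longrightarrow> pv N x y = (if x = y then 1 else 0)"
  using prob_space.prob_space[OF ps_walk]
  by (auto simp: pv_def visit_boundary walk_space_def space_stream_space)

lemma pv_rec:
  assumes "x \<notin> {0, int N}" "x \<noteq> y"
  shows "pv N x y = (pv N (x-1) y + pv N (x+1) y) / 2"
proof -
  interpret M: prob_space "measure_pmf step_pmf" by (rule prob_space_measure_pmf)
  interpret S: prob_space walk_space by (rule ps_walk)
  have "emeasure walk_space (visit N x y) =
     (\<integral>\<^sup>+t. emeasure walk_space {\<omega>\<in>space walk_space. t ## \<omega> \<in> visit N x y} \<partial>measure_pmf step_pmf)"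
    unfolding walk_space_def
    by (rule prob_space.emeasure_stream_space[OF prob_space_measure_pmf]) (simp add: visit_sets[unfolded walk_space_def])
  also have "\<dots> = (\<integral>\<^sup>+t. emeasure walk_space (visit N (x+t) y) \<partial>measure_pmf step_pmf)"
    using assms by (simp add: visit_Stream walk_space_def space_stream_space)
  also have "\<dots> = (\<Sum>t\<in>{-1,1}. emeasure walk_space (visit N (x+t) y) * pmf step_pmf t)"
    by (rule nn_integral_measure_pmf_support) (auto simp: set_pmf_step)
  also have "\<dots> = ennreal ((pv N (x-1) y + pv N (x+1) y) / 2)"
    by (simp add: pmf_step S.emeasure_eq_measure pv_def ennreal_half add.commute)
  finally show ?thesis
    by (simp add: S.emeasure_eq_measure pv_def divide_nonneg_nonneg)
qed

lemma walk_range_sum: "real (walk_range N x \<omega>) = (\<Sum>y\<in>{0..int N}. indicator (visit N x y) \<omega>)"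
proof -
  have "walk_range N x \<omega> = card {y \<in> {0..int N}. \<omega> \<in> visit N x y}"
    by (simp add: walk_range_def visit_def)
  also have "real \<dots> = (\<Sum>y\<in>{0..int N}. indicator (visit N x y) \<omega>)"
    by (simp add: indicator_def sum.If_cases) (rule arg_cong[where f=card], auto)
  finally show ?thesis .
qed

lemma expected_range_sum: "expected_range N x = (\<Sum>y\<in>{0..int N}. pv N x y)"
proof -
  interpret S: prob_space walk_space by (rule ps_walk)
  have "expected_range N x = (\<integral>\<omega>. (\<Sum>y\<in>{0..int N}. indicator (visit N x y) \<omega>) \<partial>walk_space)"
    unfolding expected_range_def walk_range_sum ..
  also have "\<dots> = (\<Sum>y\<in>{0..int N}. (\<integral>\<omega>. indicator (visit N x y) \<omega> \<partial>walk_space))"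
    by (rule Bochner_Integration.integral_sum) (auto intro!: S.integrable_const_bound[where B=1] simp: indicator_def)
  also have "\<dots> = (\<Sum>y\<in>{0..int N}. pv N x y)"
    by (simp add: pv_def)
  finally show ?thesis .
qed



lemma lin_nat:
  fixes g :: "nat \<Rightarrow> real"
  assumes rec: "\<And>n. 0 < n \<Longrightarrow> n < L \<Longrightarrow> g n = (g (n-1) + g (n+1)) / 2"
  shows "n \<le> L \<Longrightarrow> g n = g 0 + real n * (g 1 - g 0)"
proof -
  have "n < L \<Longrightarrow> g n = g 0 + real n * (g 1 - g 0) \<and> g (Suc n) = g 0 + real (Suc n) * (g 1 - g 0)" for n
  proof (induction n)
    case 0 then show ?case by simp
  next
    case (Suc n)
    then have IH: "g n = g 0 + real n * (g 1 - g 0)" "g (Suc n) = g 0 + real (Suc n) * (g 1 - g 0)" by auto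
    have "g (Suc n) = (g n + g (Suc (Suc n))) / 2" using rec[of "Suc n"] Suc.prems by simp
    then have "g (Suc (Suc n)) = 2 * g (Suc n) - g n" by simp
    then show ?case using IH by (simp add: algebra_simps)
  qed
  note cl = this
  assume nL: "n \<le> L"
  show ?thesis
  proof (cases "n < L")
    case True then show ?thesis using cl by blast
  next
    case False
    show ?thesis
    proof (cases n)
      case 0 then show ?thesis by simp
    next
      case (Suc m) then show ?thesis using cl[of m] False nL by simp
    qed
  qed
qed

lemma lin_int:
  fixes f :: "int \<Rightarrow> real"
  assumes "a < b" and rec: "\<And>x. a < x \<Longrightarrow> x < b \<Longrightarrow> f x = (f (x-1) + f (x+1)) / 2"
    and "a \<le> x" "x \<le> b"
  shows "f x = f a + (f b - f a) * (x - a) / (b - a)"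
proof -
  define g where "g n = f (a + int n)" for n
  define L where "L = nat (b - a)"
  have r: "g n = (g (n-1) + g (n+1)) / 2" if "0 < n" "n < L" for n
    using rec[of "a + int n"] that by (simp add: g_def L_def of_nat_diff algebra_simps)
  have gx: "g (nat (x - a)) = g 0 + real (nat (x-a)) * (g 1 - g 0)"
    by (rule lin_nat[OF r]) (use assms in \<open>auto simp: L_def\<close>)
  have gb: "g L = g 0 + real L * (g 1 - g 0)"
    by (rule lin_nat[OF r]) auto
  have L0: "real L = real_of_int (b - a)" using assms by (simp add: L_def)
  have g0: "g 0 = f a" "g L = f b" using assms by (simp_all add: g_def L_def)
  have d: "g 1 - g 0 = (f b - f a) / (b - a)"
    using gb assms L0 g0 by (simp add: field_simps)
  have "f x = g (nat (x - a))" using assms by (simp add: g_def)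
  also have "\<dots> = f a + (x - a) * ((f b - f a) / (b - a))" using gx d g0 assms by simp
  finally show ?thesis by simp
qed

lemma pv_self: "pv N y y = 1"
proof -
  have "visit N y y = UNIV" by (auto simp: visit_def intro: exI[of _ 0])
  then show ?thesis using prob_space.prob_space[OF ps_walk]
    by (simp add: pv_def walk_space_def space_stream_space)
qed

lemma pv_formula:
  assumes "0 \<le> x" "x \<le> int N" "0 \<le> y" "y \<le> int N"
  shows "pv N x y = (if x = y then 1 else if x < y then x / y else (int N - x) / (int N - y))"
proof (cases "x = y")
  case True then show ?thesis by (simp add: pv_self)
next
  case ne: False
  show ?thesis
  proof (cases "x < y")
    case True
    have rec: "\<And>z. 0 < z \<Longrightarrow> z < y \<Longrightarrow> pv N z y = (pv N (z-1) y + pv N (z+1) y) / 2"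
      using True assms by (intro pv_rec) auto
    have "pv N x y = pv N 0 y + (pv N y y - pv N 0 y) * (x - 0) / (y - 0)"
      by (rule lin_int[of 0 y "\<lambda>x. pv N x y", OF _ rec]) (use True assms in auto)
    then show ?thesis using True ne assms by (simp add: pv_self pv_boundary)
  next
    case False
    then have yx: "y < x" using ne by simp
    have rec: "\<And>z. y < z \<Longrightarrow> z < int N \<Longrightarrow> pv N z y = (pv N (z-1) y + pv N (z+1) y) / 2"
      using yx assms by (intro pv_rec) auto
    have "pv N x y = pv N y y + (pv N (int N) y - pv N y y) * (x - y) / (int N - y)"
      by (rule lin_int[of y "int N" "\<lambda>x. pv N x y", OF _ rec]) (use yx assms in auto)
    moreover have "y \<noteq> int N" using yx assms by simp
    ultimately show ?thesis using yx ne assms by (simp add: pv_self pv_boundary field_simps)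
  qed
qed



lemma sumA: "x \<le> N \<Longrightarrow> (\<Sum>y\<in>{x<..N}. 1 / real y) = harm N - (harm x :: real)"
proof (induction N)
  case 0 then show ?case by simp
next
  case (Suc N)
  show ?case
  proof (cases "x = Suc N")
    case True then show ?thesis by simp
  next
    case False
    then have "x \<le> N" using Suc.prems by simp
    moreover have "{x<..Suc N} = insert (Suc N) {x<..N}" using \<open>x \<le> N\<close> by auto
    ultimately show ?thesis using Suc.IH by (simp add: harm_Suc inverse_eq_divide)
  qed
qed

lemma sumB: "x \<le> N \<Longrightarrow> (\<Sum>y<x. 1 / real (N - y)) = harm N - (harm (N - x) :: real)"
proof (induction x)
  case 0 then show ?case by simp
next
  case (Suc x)
  then have "x < N" by simp
  have h: "harm (N - x) = harm (N - Suc x) + inverse (real (N - x)) "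
    using harm_Suc[of "N - Suc x"] \<open>x < N\<close> by (simp add: Suc_diff_Suc)
  show ?case using Suc h by (simp add: inverse_eq_divide)
qed

lemma expected_range_formula:
  assumes "x \<le> N"
  shows "expected_range N (int x) = 1 + real x * (harm N - harm x) + real (N - x) * (harm N - harm (N - x))"
proof -
  define h where "h y = (if y = x then 1 else if x < y then real x / real y else real (N - x) / real (N - y))" for y
  have "expected_range N (int x) = (\<Sum>y\<in>int ` {0..N}. pv N (int x) y)"
    by (simp add: expected_range_sum image_int_atLeastAtMost)
  also have "\<dots> = (\<Sum>y\<in>{0..N}. pv N (int x) (int y))"
    by (simp add: sum.reindex)
  also have "\<dots> = (\<Sum>y\<in>{0..N}. h y)"
    using assms by (intro sum.cong refl) (auto simp: pv_formula h_def of_nat_diff)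
  also have "{0..N} = {..<x} \<union> insert x {x<..N}" using assms by auto
  also have "(\<Sum>y\<in>{..<x} \<union> insert x {x<..N}. h y) = (\<Sum>y<x. h y) + (h x + (\<Sum>y\<in>{x<..N}. h y))"
    by (subst sum.union_disjoint) auto
  also have "(\<Sum>y<x. h y) = real (N - x) * (\<Sum>y<x. 1 / real (N - y))"
    by (simp add: h_def sum_distrib_left)
  also have "(\<Sum>y\<in>{x<..N}. h y) = real x * (\<Sum>y\<in>{x<..N}. 1 / real y)"
    by (simp add: h_def sum_distrib_left)
  finally show ?thesis by (simp only: sumA[OF assms] sumB[OF assms]) (simp add: h_def)
qed



lemma key_lim:
  fixes u :: "nat \<Rightarrow> nat" and c :: real
  assumes c: "0 < c" and lim: "(\<lambda>n. real (u n) / real n) \<longlonglongrightarrow> c"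
  shows "(\<lambda>n. real (u n) / real n * (harm n - harm (u n))) \<longlonglongrightarrow> c * (- ln c)"
proof -
  have r: "filterlim (\<lambda>n. real (u n) / real n * real n) at_top sequentially"
    by (rule filterlim_tendsto_pos_mult_at_top[OF lim c filterlim_real_sequentially])
  have "filterlim (\<lambda>n. real (u n)) at_top sequentially"
    by (rule filterlim_cong[THEN iffD1, OF refl refl _ r])
       (use eventually_gt_at_top[of 0] in \<open>eventually_elim, simp\<close>)
  then have hu: "filterlim u at_top sequentially"
    by (simp add: filterlim_sequentially_iff_filterlim_real)
  have g1: "(\<lambda>n. harm (u n) - ln (real (u n))) \<longlonglongrightarrow> euler_mascheroni"
    by (rule filterlim_compose[OF euler_mascheroni_LIMSEQ hu])
  have g2: "(\<lambda>n. ln (real (u n) / real n)) \<longlonglongrightarrow> ln c"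
    by (rule tendsto_ln[OF lim]) (use c in simp)
  have "(\<lambda>n. (harm n - ln (real n)) - (harm (u n) - ln (real (u n))) - ln (real (u n) / real n))
        \<longlonglongrightarrow> euler_mascheroni - euler_mascheroni - ln c"
    by (intro tendsto_intros euler_mascheroni_LIMSEQ g1 g2)
  moreover have "eventually (\<lambda>n. (harm n - ln (real n)) - (harm (u n) - ln (real (u n))) - ln (real (u n) / real n)
      = harm n - harm (u n)) sequentially"
    using eventually_gt_at_top[of 0] hu[unfolded filterlim_at_top, rule_format, of 1]
    by eventually_elim (simp add: ln_div)
  ultimately have "(\<lambda>n. harm n - harm (u n)) \<longlonglongrightarrow> - ln c"
    by (simp add: tendsto_cong)
  from tendsto_mult[OF lim this] show ?thesis .
qed



lemma ftc_ln:
  fixes c p q :: real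
  assumes "0 < p" "p \<le> q"
  shows "((\<lambda>t. c / t) has_integral (c * ln q - c * ln p)) {p..q}"
proof -
  have d: "((\<lambda>t. c * ln t) has_vector_derivative c / x) (at x within {p..q})" if "x \<in> {p..q}" for x
    using assms that
    by (auto intro!: derivative_eq_intros simp: has_real_derivative_iff_has_vector_derivative[symmetric] field_simps)
  from fundamental_theorem_of_calculus[OF assms(2) d] show ?thesis by simp
qed

lemma integral_part:
  assumes "0 < \<alpha>" "\<alpha> < 1"
  shows "integral {0..1} (\<lambda>\<beta>. \<beta> * g_dens \<alpha> \<beta>) = - \<alpha> * ln \<alpha> - (1 - \<alpha>) * ln (1 - \<alpha>)"
proof -
  define a where "a = min \<alpha> (1 - \<alpha>)"
  define b where "b = max \<alpha> (1 - \<alpha>)"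
  have ab: "0 < a" "a \<le> b" "b < 1" "a + b = 1" using assms by (auto simp: a_def b_def)
  have gd: "g_dens \<alpha> \<beta> = (if a < \<beta> \<and> \<beta> < b then a / \<beta>\<^sup>2 else if b \<le> \<beta> \<and> \<beta> \<le> 1 then 1 / \<beta>\<^sup>2 else 0)" for \<beta>
    by (simp add: g_dens_def a_def b_def Let_def)
  let ?f = "\<lambda>\<beta>. \<beta> * g_dens \<alpha> \<beta>"
  have i1: "(?f has_integral 0) {0..a}"
  proof (rule has_integral_spike_finite[where S="{a}" and f="\<lambda>_. 0"])
    show "\<And>x. x \<in> {0..a} - {a} \<Longrightarrow> ?f x = 0" using ab by (auto simp: gd)
  qed auto
  have i2: "(?f has_integral (a * ln b - a * ln a)) {a..b}"
  proof (rule has_integral_spike_finite[where S="{a,b}" and f="\<lambda>t. a / t"])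
    show "\<And>x. x \<in> {a..b} - {a,b} \<Longrightarrow> ?f x = a / x" using ab by (auto simp: gd power2_eq_square)
    show "((\<lambda>t. a / t) has_integral (a * ln b - a * ln a)) {a..b}" using ab by (intro ftc_ln) auto
  qed auto
  have i3: "(?f has_integral (1 * ln 1 - 1 * ln b)) {b..1}"
  proof (rule has_integral_spike_finite[where S="{}" and f="\<lambda>t. 1 / t"])
    show "\<And>x. x \<in> {b..1} - {} \<Longrightarrow> ?f x = 1 / x" using ab by (auto simp: gd power2_eq_square)
    show "((\<lambda>t. 1 / t) has_integral (1 * ln 1 - 1 * ln b)) {b..1}" using ab by (intro ftc_ln) auto
  qed auto
  have "(?f has_integral (0 + (a * ln b - a * ln a) + (1 * ln 1 - 1 * ln b))) {0..1}"
    using ab by (intro has_integral_combine[OF _ _ has_integral_combine[OF _ _ i1 i2] i3]) auto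
  then have "integral {0..1} ?f = 0 + (a * ln b - a * ln a) + (1 * ln 1 - 1 * ln b)"
    by (rule integral_unique)
  also have "\<dots> = - a * ln a - b * ln b"
    using ab(4) by (simp add: algebra_simps) (metis distrib_right mult_1)
  also have "\<dots> = - \<alpha> * ln \<alpha> - (1 - \<alpha>) * ln (1 - \<alpha>)"
    by (cases "\<alpha> \<le> 1 - \<alpha>") (auto simp: a_def b_def min_def max_def algebra_simps)
  finally show ?thesis .
qed



lemma main_lim:
  fixes \<alpha> :: real
  assumes a0: "0 < \<alpha>" and a1: "\<alpha> < 1"
  shows "(\<lambda>N. expected_range N \<lfloor>\<alpha> * real N\<rfloor> / real N) \<longlonglongrightarrow> - \<alpha> * ln \<alpha> - (1 - \<alpha>) * ln (1 - \<alpha>)"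
proof -
  define u where "u N = nat \<lfloor>\<alpha> * real N\<rfloor>" for N
  have fl: "\<lfloor>\<alpha> * real N\<rfloor> = int (u N)" for N
    using a0 by (simp add: u_def)
  have uN: "u N \<le> N" for N
  proof -
    have "\<lfloor>\<alpha> * real N\<rfloor> \<le> \<lfloor>real N\<rfloor>" using a0 a1 by (intro floor_mono) (simp add: mult_left_le_one_le)
    then show ?thesis by (simp add: u_def)
  qed
  have ub: "\<alpha> * real N - 1 \<le> real (u N)" "real (u N) \<le> \<alpha> * real N" for N
    using fl[of N] floor_correct[of "\<alpha> * real N"] by linarith+
  have lu: "(\<lambda>N. real (u N) / real N) \<longlonglongrightarrow> \<alpha>"
  proof (rule tendsto_sandwich[where f="\<lambda>N. \<alpha> - 1 / real N" and h="\<lambda>N. \<alpha>"])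
    have "\<alpha> - 1 / real n \<le> real (u n) / real n" if "n > 0" for n
    proof -
      have "\<alpha> - 1 / real n = (\<alpha> * real n - 1) / real n" using that by (simp add: field_simps)
      also have "\<dots> \<le> real (u n) / real n" by (rule divide_right_mono[OF ub(1)]) simp
      finally show ?thesis .
    qed
    note h = this
    show "\<forall>\<^sub>F n in sequentially. \<alpha> - 1 / real n \<le> real (u n) / real n"
      by (rule eventually_mono[OF eventually_gt_at_top[of "0::nat"] h])
    show "\<forall>\<^sub>F n in sequentially. real (u n) / real n \<le> \<alpha>"
      using eventually_gt_at_top[of 0]
      by eventually_elim (use ub in \<open>simp add: field_simps\<close>)
    show "(\<lambda>n. \<alpha> - 1 / real n) \<longlonglongrightarrow> \<alpha>"
      using tendsto_diff[OF tendsto_const[of \<alpha>] lim_1_over_n] by simp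
  qed simp
  have lv: "(\<lambda>N. real (N - u N) / real N) \<longlonglongrightarrow> 1 - \<alpha>"
  proof -
    have "(\<lambda>N. 1 - real (u N) / real N) \<longlonglongrightarrow> 1 - \<alpha>" by (intro tendsto_intros lu)
    moreover have "eventually (\<lambda>N. 1 - real (u N) / real N = real (N - u N) / real N) sequentially"
      using eventually_gt_at_top[of 0]
      by eventually_elim (use uN in \<open>simp add: of_nat_diff field_simps\<close>)
    ultimately show ?thesis by (rule Lim_transform_eventually)
  qed
  have A: "(\<lambda>N. real (u N) / real N * (harm N - harm (u N))) \<longlonglongrightarrow> \<alpha> * (- ln \<alpha>)"
    by (rule key_lim[OF a0 lu])
  have B: "(\<lambda>N. real (N - u N) / real N * (harm N - harm (N - u N))) \<longlonglongrightarrow> (1 - \<alpha>) * (- ln (1 - \<alpha>))"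
    by (rule key_lim[OF _ lv]) (use a1 in simp)
  have "(\<lambda>N. 1 / real N + real (u N) / real N * (harm N - harm (u N))
         + real (N - u N) / real N * (harm N - harm (N - u N)))
        \<longlonglongrightarrow> 0 + \<alpha> * (- ln \<alpha>) + (1 - \<alpha>) * (- ln (1 - \<alpha>))"
    by (intro tendsto_add A B lim_1_over_n)
  moreover have "eventually (\<lambda>N. 1 / real N + real (u N) / real N * (harm N - harm (u N))
         + real (N - u N) / real N * (harm N - harm (N - u N)) = expected_range N \<lfloor>\<alpha> * real N\<rfloor> / real N) sequentially"
    using eventually_gt_at_top[of 0]
    by eventually_elim (simp add: fl expected_range_formula[OF uN] field_simps)
  ultimately have "(\<lambda>N. expected_range N \<lfloor>\<alpha> * real N\<rfloor> / real N) \<longlonglongrightarrow> 0 + \<alpha> * (- ln \<alpha>) + (1 - \<alpha>) * (- ln (1 - \<alpha>))"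
    by (rule Lim_transform_eventually)
  then show ?thesis by simp
qed


theorem mainTheorem4:
  fixes \<alpha> :: real
  assumes "0 < \<alpha>" and "\<alpha> < 1"
  shows "(\<lambda>N. expected_range N \<lfloor>\<alpha> * real N\<rfloor> / real N)
           \<longlonglongrightarrow> integral {0..1} (\<lambda>\<beta>. \<beta> * g_dens \<alpha> \<beta>)
         \<and> integral {0..1} (\<lambda>\<beta>. \<beta> * g_dens \<alpha> \<beta>)
           = - \<alpha> * ln \<alpha> - (1 - \<alpha>) * ln (1 - \<alpha>)"
  using main_lim[OF assms] integral_part[OF assms] by simp

end
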